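(* Consider the deletion-only Qerror function $\mathbb{Q}:2^{R_x}\to\mathbb{R}$, $$\mathbb{Q}(X)=\sum_{j=1}^M \mathbb{Q}_j(X),\qquad \mathbb{Q}_j(X)=\frac{C_j+1}{C_j+1-\sum_{t_i\in X} w_{ij}}.$$ Then $\mathbb{Q}$ is supermodular: for all $A,B\subseteq R_x$, $$\mathbb{Q}(A\cup B)+\mathbb{Q}(A\cap B)\ \ge\ \mathbb{Q}(A)+\mathbb{Q}(B).$$
   Context: Setting: $R_x=\{t_1,\dots,t_N\}$ is a finite set of tuples and there are $M$ queries. The joint weights $w_{ij}\in\mathbb{Z}_{\ge0}$ satisfy $C_j=\sum_{i=1}^N w_{ij}$ for each $j$. For $X\subseteq R_x$, $\mathbb{Q}(X)$ is the total Qerror when exactly the tuples in $X$ are deleted. *)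

theory Defs
  imports Main Complex_Main
begin

text \<open>Tuples t_1..t_N are identified with indices {1..N}; queries with {1..M}.
  w i j is the joint weight of tuple i in query j; C_j = sum over all tuples.\<close>

definition Ccnt :: "nat \<Rightarrow> (nat \<Rightarrow> nat \<Rightarrow> nat) \<Rightarrow> nat \<Rightarrow> nat" where
  "Ccnt N w j = (\<Sum>i\<in>{1..N}. w i j)"

definition Qj :: "nat \<Rightarrow> (nat \<Rightarrow> nat \<Rightarrow> nat) \<Rightarrow> nat \<Rightarrow> nat set \<Rightarrow> real" where
  "Qj N w j X = (real (Ccnt N w j) + 1) /
      (real (Ccnt N w j) + 1 - (\<Sum>i\<in>X. real (w i j)))"

definition Qerr :: "nat \<Rightarrow> nat \<Rightarrow> (nat \<Rightarrow> nat \<Rightarrow> nat) \<Rightarrow> nat set \<Rightarrow> real" where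
  "Qerr N M w X = (\<Sum>j\<in>{1..M}. Qj N w j X)"

end

theory Submission
  imports Defs
begin

lemma key:
  fixes d a b :: real
  assumes "a \<ge> 0" "b \<ge> 0" "a + b < d"
  shows "1/(d-a) + 1/(d-b) \<le> 1/(d-a-b) + 1/d"
proof -
  have p1: "d - a - b > 0" and p2: "d - a > 0" and p3: "d - b > 0" and p4: "d > 0" using assms by auto
  have e1: "1/(d-a-b) - 1/(d-a) = b/((d-a-b)*(d-a))" using p1 p2 by (simp add: field_simps)
  have e2: "1/(d-b) - 1/d = b/((d-b)*d)" using p3 p4 by (simp add: field_simps)
  have m: "(d-a-b)*(d-a) \<le> (d-b)*d"
  proof -
    have "(d-b)*d - (d-a-b)*(d-a) = a*(2*d - a - b) + a*b - a*b + 0" by (simp add: algebra_simps)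
    moreover have "a*(2*d - a - b) \<ge> 0" using assms by simp
    ultimately show ?thesis by simp
  qed
  have "b/((d-b)*d) \<le> b/((d-a-b)*(d-a))"
    using assms(2) m p1 p2 p3 p4 by (intro divide_left_mono mult_pos_pos) auto
  with e1 e2 show ?thesis by linarith
qed

lemma perj:
  fixes N :: nat and w :: "nat \<Rightarrow> nat \<Rightarrow> nat" and A B :: "nat set"
  assumes "A \<subseteq> {1..N}" and "B \<subseteq> {1..N}"
  shows "Qj N w j A + Qj N w j B \<le> Qj N w j (A \<union> B) + Qj N w j (A \<inter> B)"
proof -
  have fA: "finite A" and fB: "finite B" using assms finite_subset by blast+
  define c where "c = real (Ccnt N w j) + 1"
  define s where "s = (\<lambda>X. \<Sum>i\<in>X. real (w i j))"
  define a where "a = s (A - B)"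
  define b where "b = s (B - A)"
  define i where "i = s (A \<inter> B)"
  have a0: "a \<ge> 0" and b0: "b \<ge> 0" and i0: "i \<ge> 0"
    unfolding a_def b_def i_def s_def by (auto intro: sum_nonneg)
  have sA: "s A = a + i"
  proof -
    have "A = (A - B) \<union> (A \<inter> B)" by blast
    hence "s A = s (A - B) + s (A \<inter> B)" unfolding s_def
      using sum.subset_diff[OF Int_lower1 fA, of "\<lambda>i. real (w i j)" B] by (simp add: Diff_Int)
    thus ?thesis using a_def i_def by simp
  qed
  have sB: "s B = b + i"
  proof -
    have "B = (B - A) \<union> (A \<inter> B)" by blast
    hence "s B = s (B - A) + s (A \<inter> B)" unfolding s_def
      using sum.subset_diff[OF Int_lower2 fB, of "\<lambda>i. real (w i j)" A] by (simp add: Diff_Int)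
    thus ?thesis using b_def i_def by simp
  qed
  have sU: "s (A \<union> B) = a + b + i"
  proof -
    have "A \<union> B = (A - B) \<union> B" by blast
    hence "s (A \<union> B) = s ((A - B) \<union> B)" by (rule arg_cong)
    also have "... = s (A - B) + s B" unfolding s_def
      using fA fB by (intro sum.union_disjoint) auto
    finally have "s (A \<union> B) = s (A - B) + s B" .
    thus ?thesis using sB a_def by simp
  qed
  have le: "s (A \<union> B) \<le> real (Ccnt N w j)"
  proof -
    have "s (A \<union> B) \<le> s {1..N}" unfolding s_def
      using assms by (intro sum_mono2) auto
    thus ?thesis unfolding s_def Ccnt_def by simp
  qed
  have lt: "a + b < c - i" using sU le c_def by simp
  have k: "1/((c-i)-a) + 1/((c-i)-b) \<le> 1/((c-i)-a-b) + 1/(c-i)"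
    using key[OF a0 b0 lt] .
  have cpos: "c > 0" unfolding c_def by simp
  have "c * (1/((c-i)-a) + 1/((c-i)-b)) \<le> c * (1/((c-i)-a-b) + 1/(c-i))"
    using k cpos by (intro mult_left_mono) auto
  hence "c/(c - (a+i)) + c/(c - (b+i)) \<le> c/(c - (a+b+i)) + c/(c - i)"
    by (simp add: distrib_left algebra_simps)
  thus ?thesis unfolding Qj_def
    using sA sB sU unfolding s_def c_def i_def by simp
qed

theorem theorem4p1:
  fixes N M :: nat and w :: "nat \<Rightarrow> nat \<Rightarrow> nat" and A B :: "nat set"
  assumes "A \<subseteq> {1..N}" and "B \<subseteq> {1..N}"
  shows "Qerr N M w (A \<union> B) + Qerr N M w (A \<inter> B) \<ge> Qerr N M w A + Qerr N M w B"
  unfolding Qerr_def sum.distrib[symmetric]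
  by (intro sum_mono perj[OF assms])

end
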